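(* Let $q \ge 2$ be an integer and let $l$ be a positive integer, with $l \ge 1$ when $n$ is odd and $l \ge 2$ when $n$ is even. Then AME states of defect $l$ in $(\mathbb{C}^q)^{\otimes n}$ do not exist if $$\frac{(m+l)!}{(m+1)!} > \frac{q^{2l}-1}{q^2-1}\cdot\frac{(2l-1)!}{l!} \quad \text{when } n = 2m,$$ and if $$\frac{(m+l+1)!}{(m+1)!} > \frac{q^{2l+1}-1}{q-1}\cdot\frac{(2l)!}{l!} \quad \text{when } n = 2m+1.$$
   Context: A pure state $|\psi\rangle \in (\mathbb{C}^q)^{\otimes n}$ is called $k$-uniform if, with $\rho = |\psi\rangle\langle\psi|$, for every subset $S \subseteq \{1,\dots,n\}$ with $|S| = k$ the reduced state of $\rho$ on the parties in $S$ equals $I/q^k$, where $I$ is the identity on $(\mathbb{C}^q)^{\otimes k}$. For an integer $l \ge 0$, an AME state of defect $l$ in $(\mathbb{C}^q)^{\otimes n}$ is a $(\lfloor n/2\rfloor - l)$-uniform state in $(\mathbb{C}^q)^{\otimes n}$. *)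

theory Defs
  imports "HOL-Analysis.Analysis"
begin

text \<open>A vector in (C^q)^{\<otimes>n} is represented by its coordinates in the computational
  basis: a function psi from basis labels (tuples i_0..i_{n-1}, with i_j < q, encoded as
  extensional functions on {..<n}) to complex numbers.\<close>

definition configs :: "nat set \<Rightarrow> nat \<Rightarrow> (nat \<Rightarrow> nat) set" where
  "configs S q = PiE S (\<lambda>_. {..<q})"

definition reduced_state ::
  "nat \<Rightarrow> nat \<Rightarrow> ((nat \<Rightarrow> nat) \<Rightarrow> complex) \<Rightarrow> nat set \<Rightarrow> (nat \<Rightarrow> nat) \<Rightarrow> (nat \<Rightarrow> nat) \<Rightarrow> complex" where
  "reduced_state q n psi S a b =
     (\<Sum>c\<in>configs ({..<n} - S) q.
        psi (\<lambda>i. if i \<in> S then a i else c i) * cnj (psi (\<lambda>i. if i \<in> S then b i else c i)))"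

definition k_uniform :: "nat \<Rightarrow> nat \<Rightarrow> nat \<Rightarrow> ((nat \<Rightarrow> nat) \<Rightarrow> complex) \<Rightarrow> bool" where
  "k_uniform q n k psi \<longleftrightarrow>
     (\<Sum>x\<in>configs {..<n} q. (cmod (psi x))\<^sup>2) = 1 \<and>
     (\<forall>S. S \<subseteq> {..<n} \<and> card S = k \<longrightarrow>
        (\<forall>a\<in>configs S q. \<forall>b\<in>configs S q.
           reduced_state q n psi S a b = (if a = b then 1 / (of_nat q) ^ k else 0)))"

definition AME_defect :: "nat \<Rightarrow> nat \<Rightarrow> nat \<Rightarrow> ((nat \<Rightarrow> nat) \<Rightarrow> complex) \<Rightarrow> bool" where
  "AME_defect q n l psi \<longleftrightarrow> k_uniform q n (n div 2 - l) psi"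

end

theory Submission
  imports Defs
begin

definition mrg :: "nat set \<Rightarrow> (nat \<Rightarrow> nat) \<Rightarrow> (nat \<Rightarrow> nat) \<Rightarrow> nat \<Rightarrow> nat" where
  "mrg T a c = (\<lambda>i. if i \<in> T then a i else c i)"

lemma finite_configs[simp]: "finite S \<Longrightarrow> finite (configs S q)"
  unfolding configs_def by (intro finite_PiE) auto

lemma card_configs: "finite S \<Longrightarrow> card (configs S q) = q ^ card S"
  unfolding configs_def by (simp add: card_PiE)

lemma configs_out: "x \<in> configs S q \<Longrightarrow> i \<notin> S \<Longrightarrow> x i = undefined"
  unfolding configs_def by (auto simp: PiE_def extensional_def)

lemma configs_in: "x \<in> configs S q \<Longrightarrow> i \<in> S \<Longrightarrow> x i < q"
  unfolding configs_def by (auto simp: PiE_def)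

lemma configs_ext: "x \<in> configs S q \<Longrightarrow> y \<in> configs S q \<Longrightarrow> (\<And>i. i \<in> S \<Longrightarrow> x i = y i) \<Longrightarrow> x = y"
  by (rule ext) (metis configs_out)

lemma mrg_in:
  assumes "T \<subseteq> V" "a \<in> configs T q" "c \<in> configs (V - T) q"
  shows "mrg T a c \<in> configs V q"
  using assms unfolding configs_def mrg_def by (auto simp: PiE_def extensional_def Pi_def)

lemma mrg_eq_iff:
  assumes "a \<in> configs T q" "c \<in> configs W q" "a' \<in> configs T q" "c' \<in> configs W q" "T \<inter> W = {}"
  shows "mrg T a c = mrg T a' c' \<longleftrightarrow> a = a' \<and> c = c'"
proof
  assume h: "mrg T a c = mrg T a' c'"
  have "a = a'"
    by (rule configs_ext[OF assms(1,3)]) (metis h mrg_def)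
  moreover have "c = c'"
    by (rule configs_ext[OF assms(2,4)]) (metis assms(5) disjoint_iff h mrg_def)
  ultimately show "a = a' \<and> c = c'" by simp
qed simp

lemma split_bij:
  assumes "T \<subseteq> V"
  shows "bij_betw (\<lambda>(a, c). mrg T a c) (configs T q \<times> configs (V - T) q) (configs V q)"
proof (rule bij_betwI')
  fix x y assume "x \<in> configs T q \<times> configs (V - T) q" "y \<in> configs T q \<times> configs (V - T) q"
  then show "((case x of (a, c) \<Rightarrow> mrg T a c) = (case y of (a, c) \<Rightarrow> mrg T a c)) = (x = y)"
    using mrg_eq_iff[of _ T q _ "V - T"] by (auto split: prod.splits)
next
  fix x assume "x \<in> configs T q \<times> configs (V - T) q"
  then show "(case x of (a, c) \<Rightarrow> mrg T a c) \<in> configs V q"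
    using mrg_in[OF assms] by auto
next
  fix y assume y: "y \<in> configs V q"
  let ?a = "restrict y T" and ?c = "restrict y (V - T)"
  have "?a \<in> configs T q" "?c \<in> configs (V - T) q"
    using y assms unfolding configs_def by (auto simp: PiE_def Pi_def)
  moreover have "y = mrg T ?a ?c"
    using y assms by (auto simp: mrg_def fun_eq_iff configs_out)
  ultimately show "\<exists>x\<in>configs T q \<times> configs (V - T) q. y = (case x of (a, c) \<Rightarrow> mrg T a c)"
    by auto
qed

lemma split_sum:
  assumes "T \<subseteq> V"
  shows "(\<Sum>x\<in>configs V q. g x) = (\<Sum>a\<in>configs T q. \<Sum>c\<in>configs (V - T) q. g (mrg T a c))"
proof -
  have "(\<Sum>x\<in>configs V q. g x) = (\<Sum>p\<in>configs T q \<times> configs (V - T) q. g ((\<lambda>(a, c). mrg T a c) p))"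
    by (rule sum.reindex_bij_betw[OF split_bij[OF assms], symmetric])
  also have "\<dots> = (\<Sum>a\<in>configs T q. \<Sum>c\<in>configs (V - T) q. g (mrg T a c))"
    by (subst sum.cartesian_product) (simp add: case_prod_beta)
  finally show ?thesis .
qed

lemma sum_if_pull: "(\<Sum>x\<in>A. if P then f x else 0) = (if P then (\<Sum>x\<in>A. f x) else 0)"
  by simp

lemma collapse8:
  fixes H :: "'a \<Rightarrow> 'b \<Rightarrow> 'a \<Rightarrow> 'b \<Rightarrow> 'a \<Rightarrow> 'b \<Rightarrow> 'a \<Rightarrow> 'b \<Rightarrow> 'c::comm_monoid_add"
  assumes "finite A" "finite B"
  shows "(\<Sum>a1\<in>A. \<Sum>c1\<in>B. \<Sum>a2\<in>A. \<Sum>c2\<in>B. \<Sum>a3\<in>A. \<Sum>c3\<in>B. \<Sum>a4\<in>A. \<Sum>c4\<in>B.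
            (if a1 = a3 then if c1 = c2 then if a2 = a4 then if c3 = c4 then H a1 c1 a2 c2 a3 c3 a4 c4 else 0 else 0 else 0 else 0))
       = (\<Sum>a1\<in>A. \<Sum>c1\<in>B. \<Sum>a2\<in>A. \<Sum>c3\<in>B. H a1 c1 a2 c1 a1 c3 a2 c3)"
  using assms by (simp add: sum_if_pull sum.delta' cong: sum.cong)

definition ind :: "bool \<Rightarrow> real" where "ind b = (if b then 1 else 0)"

lemma prod_ind: "finite A \<Longrightarrow> (\<Prod>i\<in>A. ind (P i)) = ind (\<forall>i\<in>A. P i)"
  by (induction A rule: finite_induct) (auto simp: ind_def)

definition pur :: "nat \<Rightarrow> nat \<Rightarrow> ((nat \<Rightarrow> nat) \<Rightarrow> complex) \<Rightarrow> nat set \<Rightarrow> real" where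
  "pur q n psi T = (\<Sum>a\<in>configs T q. \<Sum>b\<in>configs T q. (cmod (reduced_state q n psi T a b))\<^sup>2)"

definition quad :: "nat \<Rightarrow> nat \<Rightarrow> ((nat \<Rightarrow> nat) \<Rightarrow> complex) \<Rightarrow>
    ((nat \<Rightarrow> nat) \<Rightarrow> (nat \<Rightarrow> nat) \<Rightarrow> (nat \<Rightarrow> nat) \<Rightarrow> (nat \<Rightarrow> nat) \<Rightarrow> real) \<Rightarrow> complex" where
  "quad q n psi G = (\<Sum>x\<in>configs {..<n} q. \<Sum>y\<in>configs {..<n} q. \<Sum>x'\<in>configs {..<n} q. \<Sum>y'\<in>configs {..<n} q.
      psi x * cnj (psi y) * cnj (psi x') * psi y' * of_real (G x y x' y'))"

definition pk :: "nat \<Rightarrow> nat set \<Rightarrow> (nat \<Rightarrow> nat) \<Rightarrow> (nat \<Rightarrow> nat) \<Rightarrow> (nat \<Rightarrow> nat) \<Rightarrow> (nat \<Rightarrow> nat) \<Rightarrow> real" where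
  "pk n T x y x' y' = (\<Prod>i\<in>{..<n}. if i \<in> T then ind (x i = x' i \<and> y i = y' i) else ind (x i = y i \<and> x' i = y' i))"

lemma pk_alt: "pk n T x y x' y' = ind (\<forall>i\<in>{..<n}. if i \<in> T then (x i = x' i \<and> y i = y' i) else (x i = y i \<and> x' i = y' i))"
proof -
  have "pk n T x y x' y' = (\<Prod>i\<in>{..<n}. ind (if i \<in> T then (x i = x' i \<and> y i = y' i) else (x i = y i \<and> x' i = y' i)))"
    unfolding pk_def by (intro prod.cong) auto
  then show ?thesis by (simp add: prod_ind)
qed

lemma pk_mrg:
  assumes T: "T \<subseteq> {..<n}"
    and a: "a1 \<in> configs T q" "a2 \<in> configs T q" "a3 \<in> configs T q" "a4 \<in> configs T q"
    and c: "c1 \<in> configs ({..<n} - T) q" "c2 \<in> configs ({..<n} - T) q" "c3 \<in> configs ({..<n} - T) q" "c4 \<in> configs ({..<n} - T) q"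
  shows "pk n T (mrg T a1 c1) (mrg T a2 c2) (mrg T a3 c3) (mrg T a4 c4) = ind (a1 = a3 \<and> c1 = c2 \<and> a2 = a4 \<and> c3 = c4)"
proof -
  have "(\<forall>i\<in>{..<n}. if i \<in> T then (mrg T a1 c1 i = mrg T a3 c3 i \<and> mrg T a2 c2 i = mrg T a4 c4 i)
          else (mrg T a1 c1 i = mrg T a2 c2 i \<and> mrg T a3 c3 i = mrg T a4 c4 i))
       \<longleftrightarrow> (a1 = a3 \<and> c1 = c2 \<and> a2 = a4 \<and> c3 = c4)" (is "?L \<longleftrightarrow> ?R")
  proof
    assume L: ?L
    have Li: "\<And>i. i < n \<Longrightarrow> (if i \<in> T then (mrg T a1 c1 i = mrg T a3 c3 i \<and> mrg T a2 c2 i = mrg T a4 c4 i)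
          else (mrg T a1 c1 i = mrg T a2 c2 i \<and> mrg T a3 c3 i = mrg T a4 c4 i))" using L by auto
    have "a1 = a3"
    proof (rule configs_ext[OF a(1,3)])
      fix i assume i: "i \<in> T" with T have "i < n" by auto
      from Li[OF this] i show "a1 i = a3 i" by (simp add: mrg_def)
    qed
    moreover have "a2 = a4"
    proof (rule configs_ext[OF a(2,4)])
      fix i assume i: "i \<in> T" with T have "i < n" by auto
      from Li[OF this] i show "a2 i = a4 i" by (simp add: mrg_def)
    qed
    moreover have "c1 = c2"
    proof (rule configs_ext[OF c(1,2)])
      fix i assume i: "i \<in> {..<n} - T" then have "i < n" by auto
      from Li[OF this] i show "c1 i = c2 i" by (simp add: mrg_def)
    qed
    moreover have "c3 = c4"
    proof (rule configs_ext[OF c(3,4)])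
      fix i assume i: "i \<in> {..<n} - T" then have "i < n" by auto
      from Li[OF this] i show "c3 i = c4 i" by (simp add: mrg_def)
    qed
    ultimately show ?R by simp
  qed (auto simp: mrg_def)
  then show ?thesis by (simp add: pk_alt)
qed

lemma rs_mrg: "reduced_state q n psi T a b =
   (\<Sum>c\<in>configs ({..<n} - T) q. psi (mrg T a c) * cnj (psi (mrg T b c)))"
  unfolding reduced_state_def mrg_def ..

lemma pur_quad:
  assumes T: "T \<subseteq> {..<n}"
  shows "complex_of_real (pur q n psi T) = quad q n psi (pk n T)"
proof -
  let ?A = "configs T q" and ?B = "configs ({..<n} - T) q"
  have fA: "finite ?A" and fB: "finite ?B" using T by (auto intro!: finite_configs intro: finite_subset)
  let ?H = "\<lambda>a1 c1 a2 c2 a3 c3 a4 c4. psi (mrg T a1 c1) * cnj (psi (mrg T a2 c2)) * cnj (psi (mrg T a3 c3)) * psi (mrg T a4 c4)"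
  have "quad q n psi (pk n T) = (\<Sum>a1\<in>?A. \<Sum>c1\<in>?B. \<Sum>a2\<in>?A. \<Sum>c2\<in>?B. \<Sum>a3\<in>?A. \<Sum>c3\<in>?B. \<Sum>a4\<in>?A. \<Sum>c4\<in>?B.
      ?H a1 c1 a2 c2 a3 c3 a4 c4 * of_real (pk n T (mrg T a1 c1) (mrg T a2 c2) (mrg T a3 c3) (mrg T a4 c4)))"
    unfolding quad_def by (simp only: split_sum[OF T])
  also have "\<dots> = (\<Sum>a1\<in>?A. \<Sum>c1\<in>?B. \<Sum>a2\<in>?A. \<Sum>c2\<in>?B. \<Sum>a3\<in>?A. \<Sum>c3\<in>?B. \<Sum>a4\<in>?A. \<Sum>c4\<in>?B.
      (if a1 = a3 then if c1 = c2 then if a2 = a4 then if c3 = c4 then ?H a1 c1 a2 c2 a3 c3 a4 c4 else 0 else 0 else 0 else 0))"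
    by (intro sum.cong refl) (simp add: pk_mrg[OF T] ind_def)
  also have "\<dots> = (\<Sum>a1\<in>?A. \<Sum>c1\<in>?B. \<Sum>a2\<in>?A. \<Sum>c3\<in>?B. ?H a1 c1 a2 c1 a1 c3 a2 c3)"
    by (rule collapse8[OF fA fB])
  also have "\<dots> = (\<Sum>a1\<in>?A. \<Sum>a2\<in>?A. \<Sum>c1\<in>?B. \<Sum>c3\<in>?B. ?H a1 c1 a2 c1 a1 c3 a2 c3)"
    by (intro sum.cong refl sum.swap)
  also have "\<dots> = (\<Sum>a\<in>?A. \<Sum>b\<in>?A. reduced_state q n psi T a b * cnj (reduced_state q n psi T a b))"
    unfolding rs_mrg by (simp add: sum_product cnj_sum mult_ac)
  also have "\<dots> = complex_of_real (pur q n psi T)"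
    unfolding pur_def of_real_sum by (intro sum.cong refl) (rule complex_norm_square[symmetric])
  finally show ?thesis by simp
qed

lemma quad_swap: "quad q n psi (\<lambda>x y x' y'. G x x' y y') = quad q n psi G"
proof -
  let ?C = "configs {..<n} q"
  have "quad q n psi (\<lambda>x y x' y'. G x x' y y') = (\<Sum>x\<in>?C. \<Sum>y\<in>?C. \<Sum>x'\<in>?C. \<Sum>y'\<in>?C.
      psi x * cnj (psi y) * cnj (psi x') * psi y' * of_real (G x x' y y'))" unfolding quad_def ..
  also have "\<dots> = (\<Sum>x\<in>?C. \<Sum>x'\<in>?C. \<Sum>y\<in>?C. \<Sum>y'\<in>?C.
      psi x * cnj (psi y) * cnj (psi x') * psi y' * of_real (G x x' y y'))"
    by (intro sum.cong refl sum.swap)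
  also have "\<dots> = quad q n psi G" unfolding quad_def by (simp add: mult_ac)
  finally show ?thesis .
qed

lemma pur_compl:
  assumes T: "T \<subseteq> {..<n}"
  shows "pur q n psi ({..<n} - T) = pur q n psi T"
proof -
  have "complex_of_real (pur q n psi ({..<n} - T)) = quad q n psi (pk n ({..<n} - T))"
    by (rule pur_quad) auto
  also have "\<dots> = quad q n psi (\<lambda>x y x' y'. pk n ({..<n} - T) x x' y y')"
    by (rule quad_swap[symmetric])
  also have "(\<lambda>x y x' y'. pk n ({..<n} - T) x x' y y') = pk n T"
    unfolding pk_def by (intro ext prod.cong) (auto simp: conj_commute)
  also have "quad q n psi (pk n T) = complex_of_real (pur q n psi T)"
    by (rule pur_quad[OF T, symmetric])
  finally show ?thesis by simp
qed

lemma sum_swap4: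
  "(\<Sum>x\<in>A. \<Sum>y\<in>B. \<Sum>z\<in>C. \<Sum>w\<in>D. \<Sum>t\<in>I. F x y z w t) = (\<Sum>t\<in>I. \<Sum>x\<in>A. \<Sum>y\<in>B. \<Sum>z\<in>C. \<Sum>w\<in>D. F x y z w t)"
proof -
  have "(\<Sum>x\<in>A. \<Sum>y\<in>B. \<Sum>z\<in>C. \<Sum>w\<in>D. \<Sum>t\<in>I. F x y z w t) = (\<Sum>x\<in>A. \<Sum>y\<in>B. \<Sum>z\<in>C. \<Sum>t\<in>I. \<Sum>w\<in>D. F x y z w t)"
    by (intro sum.cong refl sum.swap)
  also have "\<dots> = (\<Sum>x\<in>A. \<Sum>y\<in>B. \<Sum>t\<in>I. \<Sum>z\<in>C. \<Sum>w\<in>D. F x y z w t)"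
    by (intro sum.cong refl sum.swap)
  also have "\<dots> = (\<Sum>x\<in>A. \<Sum>t\<in>I. \<Sum>y\<in>B. \<Sum>z\<in>C. \<Sum>w\<in>D. F x y z w t)"
    by (intro sum.cong refl sum.swap)
  also have "\<dots> = (\<Sum>t\<in>I. \<Sum>x\<in>A. \<Sum>y\<in>B. \<Sum>z\<in>C. \<Sum>w\<in>D. F x y z w t)"
    by (rule sum.swap)
  finally show ?thesis .
qed

lemma quad_lin:
  assumes "finite I"
  shows "quad q n psi (\<lambda>x y x' y'. \<Sum>t\<in>I. f t * G t x y x' y') = (\<Sum>t\<in>I. of_real (f t) * quad q n psi (G t))"
proof -
  let ?C = "configs {..<n} q"
  have "quad q n psi (\<lambda>x y x' y'. \<Sum>t\<in>I. f t * G t x y x' y') = (\<Sum>x\<in>?C. \<Sum>y\<in>?C. \<Sum>x'\<in>?C. \<Sum>y'\<in>?C. \<Sum>t\<in>I.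
      of_real (f t) * (psi x * cnj (psi y) * cnj (psi x') * psi y' * of_real (G t x y x' y')))"
    unfolding quad_def by (simp add: of_real_sum sum_distrib_left mult_ac)
  also have "\<dots> = (\<Sum>t\<in>I. \<Sum>x\<in>?C. \<Sum>y\<in>?C. \<Sum>x'\<in>?C. \<Sum>y'\<in>?C.
      of_real (f t) * (psi x * cnj (psi y) * cnj (psi x') * psi y' * of_real (G t x y x' y')))"
    by (rule sum_swap4)
  also have "\<dots> = (\<Sum>t\<in>I. of_real (f t) * quad q n psi (G t))"
    unfolding quad_def by (simp add: sum_distrib_left)
  finally show ?thesis .
qed

definition kI :: "(nat \<Rightarrow> nat) \<Rightarrow> (nat \<Rightarrow> nat) \<Rightarrow> (nat \<Rightarrow> nat) \<Rightarrow> (nat \<Rightarrow> nat) \<Rightarrow> nat \<Rightarrow> real" where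
  "kI x y x' y' i = ind (x i = x' i \<and> y i = y' i)"
definition kT :: "(nat \<Rightarrow> nat) \<Rightarrow> (nat \<Rightarrow> nat) \<Rightarrow> (nat \<Rightarrow> nat) \<Rightarrow> (nat \<Rightarrow> nat) \<Rightarrow> nat \<Rightarrow> real" where
  "kT x y x' y' i = ind (x i = y i \<and> x' i = y' i)"

definition kA :: "nat \<Rightarrow> nat \<Rightarrow> nat set \<Rightarrow> (nat \<Rightarrow> nat) \<Rightarrow> (nat \<Rightarrow> nat) \<Rightarrow> (nat \<Rightarrow> nat) \<Rightarrow> (nat \<Rightarrow> nat) \<Rightarrow> real" where
  "kA q n S x y x' y' = (\<Prod>i\<in>{..<n}. if i \<in> S then real q * kI x y x' y' i - kT x y x' y' i else kT x y x' y' i)"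

lemma prod_if_split:
  assumes "finite N" "S \<subseteq> N"
  shows "(\<Prod>i\<in>N. if i \<in> S then f i else g i) = (\<Prod>i\<in>S. f i) * (\<Prod>i\<in>N - S. g i)"
proof -
  have "(\<Prod>i\<in>N. if i \<in> S then f i else g i) = (\<Prod>i\<in>N - S. if i \<in> S then f i else g i) * (\<Prod>i\<in>S. if i \<in> S then f i else g i)"
    by (rule prod.subset_diff[OF assms(2,1)])
  also have "\<dots> = (\<Prod>i\<in>N - S. g i) * (\<Prod>i\<in>S. f i)"
    by (intro arg_cong2[where f="(*)"] prod.cong) auto
  finally show ?thesis by (simp add: mult_ac)
qed

lemma prod_split3:
  fixes n :: nat
  assumes "T \<subseteq> S" "S \<subseteq> {..<n}"
  shows "(\<Prod>i\<in>{..<n} - T. f i) = (\<Prod>i\<in>S - T. f i) * (\<Prod>i\<in>{..<n} - S. f i)"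
proof -
  have e: "{..<n} - T = (S - T) \<union> ({..<n} - S)" using assms by auto
  have fS: "finite S" by (rule finite_subset[OF assms(2)]) simp
  show ?thesis unfolding e by (rule prod.union_disjoint) (use fS in auto)
qed

lemma pk_split: "T \<subseteq> {..<n} \<Longrightarrow> pk n T x y x' y' = (\<Prod>i\<in>T. kI x y x' y' i) * (\<Prod>i\<in>{..<n} - T. kT x y x' y' i)"
  unfolding pk_def kI_def kT_def by (rule prod_if_split) auto

lemma kA_split: "S \<subseteq> {..<n} \<Longrightarrow> kA q n S x y x' y' = (\<Prod>i\<in>S. real q * kI x y x' y' i - kT x y x' y' i) * (\<Prod>i\<in>{..<n} - S. kT x y x' y' i)"
  unfolding kA_def by (rule prod_if_split) auto

lemma kA_expand:
  assumes S: "S \<subseteq> {..<n}"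
  shows "kA q n S x y x' y' = (\<Sum>T\<in>Pow S. ((-1) ^ card (S - T) * real q ^ card T) * pk n T x y x' y')"
proof -
  have fS: "finite S" by (rule finite_subset[OF S]) simp
  have "kA q n S x y x' y' = (\<Prod>i\<in>S. real q * kI x y x' y' i + (- kT x y x' y' i)) * (\<Prod>i\<in>{..<n} - S. kT x y x' y' i)"
    using kA_split[OF S] by (simp only: diff_conv_add_uminus)
  also have "\<dots> = (\<Sum>T\<in>Pow S. (\<Prod>i\<in>T. real q * kI x y x' y' i) * (\<Prod>i\<in>S - T. - kT x y x' y' i)) * (\<Prod>i\<in>{..<n} - S. kT x y x' y' i)"
    by (simp only: prod_add[OF fS])
  also have "\<dots> = (\<Sum>T\<in>Pow S. ((-1) ^ card (S - T) * real q ^ card T) * pk n T x y x' y')"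
    unfolding sum_distrib_right
  proof (intro sum.cong refl)
    fix T assume T: "T \<in> Pow S"
    then have TS: "T \<subseteq> S" by auto
    have fT: "finite T" using finite_subset[OF TS fS] .
    have e: "{..<n} - T = (S - T) \<union> ({..<n} - S)" using TS S by auto
    have "pk n T x y x' y' = (\<Prod>i\<in>T. kI x y x' y' i) * ((\<Prod>i\<in>S - T. kT x y x' y' i) * (\<Prod>i\<in>{..<n} - S. kT x y x' y' i))"
      using TS S by (simp add: pk_split prod_split3[OF TS S])
    moreover have "(\<Prod>i\<in>T. real q * kI x y x' y' i) = real q ^ card T * (\<Prod>i\<in>T. kI x y x' y' i)"
      by (simp add: prod.distrib)
    moreover have "(\<Prod>i\<in>S - T. - kT x y x' y' i) = (-1) ^ card (S - T) * (\<Prod>i\<in>S - T. kT x y x' y' i)"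
      by (rule prod_uminus)
    ultimately show "(\<Prod>i\<in>T. real q * kI x y x' y' i) * (\<Prod>i\<in>S - T. - kT x y x' y' i) * (\<Prod>i\<in>{..<n} - S. kT x y x' y' i)
        = (-1) ^ card (S - T) * real q ^ card T * pk n T x y x' y'"
      by (simp add: mult_ac)
  qed
  finally show ?thesis .
qed

lemma kA_sum:
  assumes S: "S \<subseteq> {..<n}"
  shows "(\<Sum>T\<in>Pow S. kA q n T x y x' y') = real q ^ card S * pk n S x y x' y'"
proof -
  have fS: "finite S" by (rule finite_subset[OF S]) simp
  have "(\<Sum>T\<in>Pow S. kA q n T x y x' y') = (\<Sum>T\<in>Pow S. (\<Prod>i\<in>T. real q * kI x y x' y' i - kT x y x' y' i) * (\<Prod>i\<in>S - T. kT x y x' y' i)) * (\<Prod>i\<in>{..<n} - S. kT x y x' y' i)"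
    unfolding sum_distrib_right
  proof (intro sum.cong refl)
    fix T assume T: "T \<in> Pow S"
    then have TS: "T \<subseteq> S" by auto
    have e: "{..<n} - T = (S - T) \<union> ({..<n} - S)" using TS S by auto
    show "kA q n T x y x' y' = (\<Prod>i\<in>T. real q * kI x y x' y' i - kT x y x' y' i) * (\<Prod>i\<in>S - T. kT x y x' y' i) * (\<Prod>i\<in>{..<n} - S. kT x y x' y' i)"
      using TS S by (subst kA_split) (auto simp: prod_split3[OF TS S] mult_ac)
  qed
  also have "\<dots> = (\<Prod>i\<in>S. (real q * kI x y x' y' i - kT x y x' y' i) + kT x y x' y' i) * (\<Prod>i\<in>{..<n} - S. kT x y x' y' i)"
    by (simp only: prod_add[OF fS])
  also have "\<dots> = real q ^ card S * pk n S x y x' y'"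
    by (simp add: pk_split[OF S] prod.distrib)
  finally show ?thesis .
qed

definition E :: "nat \<Rightarrow> (nat \<times> nat) set" where "E q = {..<q} \<times> {..<q}"

definition wK :: "nat \<Rightarrow> nat \<Rightarrow> nat \<Rightarrow> nat \<times> nat \<Rightarrow> real" where
  "wK q a b e = sqrt (real q) * (ind (a = fst e \<and> b = snd e) - ind (a = b \<and> fst e = snd e) / real q)"
definition wT :: "nat \<Rightarrow> nat \<Rightarrow> nat \<times> nat \<Rightarrow> real" where
  "wT a b e = ind (a = b \<and> e = (0, 0))"

lemma finite_E[simp]: "finite (E q)" unfolding E_def by simp

lemma wT_fac:
  assumes "q > 0"
  shows "(\<Sum>e\<in>E q. wT a b e * wT a' b' e) = ind (a = b \<and> a' = b')"
proof -
  have "(\<Sum>e\<in>E q. wT a b e * wT a' b' e) = (\<Sum>e\<in>E q. if e = (0, 0) then ind (a = b \<and> a' = b') else 0)"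
    by (intro sum.cong refl) (auto simp: wT_def ind_def)
  also have "\<dots> = ind (a = b \<and> a' = b')" using assms by (simp add: E_def)
  finally show ?thesis .
qed

lemma sum_E_ind1:
  assumes "a < q" "b < q"
  shows "(\<Sum>e\<in>E q. ind (a = fst e \<and> b = snd e) * f e) = f (a, b)"
proof -
  have "(\<Sum>e\<in>E q. ind (a = fst e \<and> b = snd e) * f e) = (\<Sum>e\<in>E q. if e = (a, b) then f e else 0)"
    by (intro sum.cong refl) (auto simp: ind_def)
  also have "\<dots> = f (a, b)" using assms by (simp add: E_def)
  finally show ?thesis .
qed

lemma sum_E_diag: "(\<Sum>e\<in>E q. ind (fst e = snd e)) = real q"
proof -
  have "(\<Sum>e\<in>E q. ind (fst e = snd e)) = (\<Sum>c\<in>{..<q}. \<Sum>d\<in>{..<q}. ind (c = d))"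
    unfolding E_def by (subst sum.cartesian_product) (simp add: case_prod_beta)
  also have "\<dots> = (\<Sum>c\<in>{..<q}. 1)"
    by (intro sum.cong refl) (simp add: ind_def)
  finally show ?thesis by simp
qed

lemma wK_fac:
  assumes q: "q > 0" and ab: "a < q" "b < q" "a' < q" "b' < q"
  shows "(\<Sum>e\<in>E q. wK q a b e * wK q a' b' e) = real q * ind (a = a' \<and> b = b') - ind (a = b \<and> a' = b')"
proof -
  let ?I = "\<lambda>a b e. ind (a = fst e \<and> b = snd e)" and ?D = "\<lambda>a b e. ind (a = b \<and> fst e = snd e)"
  have sq: "sqrt (real q) * sqrt (real q) = real q" using q by simp
  have pt: "wK q a b e * wK q a' b' e = real q * (?I a b e * ?I a' b' e) - ?I a b e * ?D a' b' e
      - ?I a' b' e * ?D a b e + ?D a b e * ?D a' b' e / real q" for e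
  proof -
    have "wK q a b e * wK q a' b' e = (sqrt (real q) * sqrt (real q)) * ((?I a b e - ?D a b e / real q) * (?I a' b' e - ?D a' b' e / real q))"
      unfolding wK_def by (simp only: mult_ac)
    also have "\<dots> = real q * ((?I a b e - ?D a b e / real q) * (?I a' b' e - ?D a' b' e / real q))"
      by (simp only: sq)
    also have "\<dots> = real q * (?I a b e * ?I a' b' e) - ?I a b e * ?D a' b' e
      - ?I a' b' e * ?D a b e + ?D a b e * ?D a' b' e / real q"
      using q by (simp add: field_simps)
    finally show ?thesis .
  qed
  have "(\<Sum>e\<in>E q. wK q a b e * wK q a' b' e) =
      real q * (\<Sum>e\<in>E q. ?I a b e * ?I a' b' e) - (\<Sum>e\<in>E q. ?I a b e * ?D a' b' e)
        - (\<Sum>e\<in>E q. ?I a' b' e * ?D a b e) + (\<Sum>e\<in>E q. ?D a b e * ?D a' b' e) / real q"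
    unfolding pt by (simp add: sum.distrib sum_subtractf sum_divide_distrib sum_distrib_left)
  also have "(\<Sum>e\<in>E q. ?I a b e * ?I a' b' e) = ind (a = a' \<and> b = b')"
    by (subst sum_E_ind1[OF ab(1,2)]) (auto simp: ind_def)
  also have "(\<Sum>e\<in>E q. ?I a b e * ?D a' b' e) = ind (a = b \<and> a' = b')"
    by (subst sum_E_ind1[OF ab(1,2)]) (auto simp: ind_def)
  also have "(\<Sum>e\<in>E q. ?I a' b' e * ?D a b e) = ind (a = b \<and> a' = b')"
    by (subst sum_E_ind1[OF ab(3,4)]) (auto simp: ind_def)
  also have "(\<Sum>e\<in>E q. ?D a b e * ?D a' b' e) = ind (a = b \<and> a' = b') * real q"
  proof -
    have "(\<Sum>e\<in>E q. ?D a b e * ?D a' b' e) = (\<Sum>e\<in>E q. ind (a = b \<and> a' = b') * ind (fst e = snd e))"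
      by (intro sum.cong refl) (auto simp: ind_def)
    then show ?thesis by (simp add: sum_distrib_left[symmetric] sum_E_diag)
  qed
  finally show ?thesis using q by (simp add: field_simps)
qed

definition wS :: "nat \<Rightarrow> nat set \<Rightarrow> nat \<Rightarrow> nat \<Rightarrow> nat \<Rightarrow> nat \<times> nat \<Rightarrow> real" where
  "wS q S i a b e = (if i \<in> S then wK q a b e else wT a b e)"

definition W :: "nat \<Rightarrow> nat \<Rightarrow> nat set \<Rightarrow> (nat \<Rightarrow> nat \<times> nat) \<Rightarrow> (nat \<Rightarrow> nat) \<Rightarrow> (nat \<Rightarrow> nat) \<Rightarrow> real" where
  "W q n S g x y = (\<Prod>i\<in>{..<n}. wS q S i (x i) (y i) (g i))"

definition Ar :: "nat \<Rightarrow> nat \<Rightarrow> ((nat \<Rightarrow> nat) \<Rightarrow> complex) \<Rightarrow> nat set \<Rightarrow> real" where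
  "Ar q n psi S = (\<Sum>g\<in>PiE {..<n} (\<lambda>_. E q).
      (cmod (\<Sum>x\<in>configs {..<n} q. \<Sum>y\<in>configs {..<n} q. psi x * cnj (psi y) * of_real (W q n S g x y)))\<^sup>2)"

lemma Ar_nonneg: "Ar q n psi S \<ge> 0"
  unfolding Ar_def by (intro sum_nonneg) auto

lemma kA_fac:
  assumes q: "q > 0" and xy: "x \<in> configs {..<n} q" "y \<in> configs {..<n} q" "x' \<in> configs {..<n} q" "y' \<in> configs {..<n} q"
  shows "kA q n S x y x' y' = (\<Sum>g\<in>PiE {..<n} (\<lambda>_. E q). W q n S g x y * W q n S g x' y')"
proof -
  have "kA q n S x y x' y' = (\<Prod>i\<in>{..<n}. \<Sum>e\<in>E q. wS q S i (x i) (y i) e * wS q S i (x' i) (y' i) e)"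
    unfolding kA_def
  proof (intro prod.cong refl)
    fix i assume i: "i \<in> {..<n}"
    have lt: "x i < q" "y i < q" "x' i < q" "y' i < q" using xy i configs_in by blast+
    show "(if i \<in> S then real q * kI x y x' y' i - kT x y x' y' i else kT x y x' y' i) =
          (\<Sum>e\<in>E q. wS q S i (x i) (y i) e * wS q S i (x' i) (y' i) e)"
      using wK_fac[OF q lt] wT_fac[OF q] by (simp add: wS_def kI_def kT_def)
  qed
  also have "\<dots> = (\<Sum>g\<in>PiE {..<n} (\<lambda>_. E q). \<Prod>i\<in>{..<n}. wS q S i (x i) (y i) (g i) * wS q S i (x' i) (y' i) (g i))"
    by (rule prod_sum_PiE) auto
  also have "\<dots> = (\<Sum>g\<in>PiE {..<n} (\<lambda>_. E q). W q n S g x y * W q n S g x' y')"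
    unfolding W_def by (simp add: prod.distrib)
  finally show ?thesis .
qed

lemma quad_kA:
  assumes q: "q > 0"
  shows "quad q n psi (kA q n S) = complex_of_real (Ar q n psi S)"
proof -
  let ?C = "configs {..<n} q" and ?G = "PiE {..<n} (\<lambda>_. E q)"
  let ?V = "\<lambda>g. (\<Sum>x\<in>?C. \<Sum>y\<in>?C. psi x * cnj (psi y) * of_real (W q n S g x y))"
  have "quad q n psi (kA q n S) = (\<Sum>x\<in>?C. \<Sum>y\<in>?C. \<Sum>x'\<in>?C. \<Sum>y'\<in>?C. \<Sum>g\<in>?G.
      (psi x * cnj (psi y) * of_real (W q n S g x y)) * cnj (psi x' * cnj (psi y') * of_real (W q n S g x' y')))"
    unfolding quad_def
    by (intro sum.cong refl) (simp add: kA_fac[OF q] of_real_sum sum_distrib_left mult_ac)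
  also have "\<dots> = (\<Sum>g\<in>?G. \<Sum>x\<in>?C. \<Sum>y\<in>?C. \<Sum>x'\<in>?C. \<Sum>y'\<in>?C.
      (psi x * cnj (psi y) * of_real (W q n S g x y)) * cnj (psi x' * cnj (psi y') * of_real (W q n S g x' y')))"
    by (rule sum_swap4)
  also have "\<dots> = (\<Sum>g\<in>?G. \<Sum>x\<in>?C. \<Sum>x'\<in>?C. \<Sum>y\<in>?C. \<Sum>y'\<in>?C.
      (psi x * cnj (psi y) * of_real (W q n S g x y)) * cnj (psi x' * cnj (psi y') * of_real (W q n S g x' y')))"
    by (intro sum.cong refl sum.swap)
  also have "\<dots> = (\<Sum>g\<in>?G. ?V g * cnj (?V g))"
    by (simp add: sum_product cnj_sum)
  also have "\<dots> = complex_of_real (Ar q n psi S)"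
    unfolding Ar_def of_real_sum by (intro sum.cong refl) (rule complex_norm_square[symmetric])
  finally show ?thesis .
qed

lemma quad_scale: "quad q n psi (\<lambda>x y x' y'. c * G x y x' y') = of_real c * quad q n psi G"
  unfolding quad_def by (simp add: sum_distrib_left mult_ac)

lemma Ar_expand:
  assumes q: "q > 0" and S: "S \<subseteq> {..<n}"
  shows "Ar q n psi S = (\<Sum>T\<in>Pow S. (-1) ^ card (S - T) * real q ^ card T * pur q n psi T)"
proof -
  have fS: "finite S" by (rule finite_subset[OF S]) simp
  have "complex_of_real (Ar q n psi S) = quad q n psi (kA q n S)" by (rule quad_kA[OF q, symmetric])
  also have "kA q n S = (\<lambda>x y x' y'. \<Sum>T\<in>Pow S. ((-1) ^ card (S - T) * real q ^ card T) * pk n T x y x' y')"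
    by (intro ext kA_expand[OF S])
  also have "quad q n psi \<dots> = (\<Sum>T\<in>Pow S. of_real ((-1) ^ card (S - T) * real q ^ card T) * quad q n psi (pk n T))"
    by (rule quad_lin) (simp add: fS)
  also have "\<dots> = (\<Sum>T\<in>Pow S. of_real ((-1) ^ card (S - T) * real q ^ card T) * of_real (pur q n psi T))"
    by (intro sum.cong refl) (use S in \<open>auto simp: pur_quad\<close>)
  also have "\<dots> = complex_of_real (\<Sum>T\<in>Pow S. (-1) ^ card (S - T) * real q ^ card T * pur q n psi T)"
    by (simp add: of_real_sum)
  finally show ?thesis by (simp only: of_real_eq_iff)
qed

lemma Ar_sum:
  assumes q: "q > 0" and S: "S \<subseteq> {..<n}"
  shows "(\<Sum>T\<in>Pow S. Ar q n psi T) = real q ^ card S * pur q n psi S"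
proof -
  have fS: "finite S" by (rule finite_subset[OF S]) simp
  have "complex_of_real (\<Sum>T\<in>Pow S. Ar q n psi T) = (\<Sum>T\<in>Pow S. of_real 1 * quad q n psi (kA q n T))"
    by (simp add: of_real_sum quad_kA[OF q])
  also have "\<dots> = quad q n psi (\<lambda>x y x' y'. \<Sum>T\<in>Pow S. 1 * kA q n T x y x' y')"
    by (rule quad_lin[symmetric]) (simp add: fS)
  also have "(\<lambda>x y x' y'. \<Sum>T\<in>Pow S. 1 * kA q n T x y x' y') = (\<lambda>x y x' y'. real q ^ card S * pk n S x y x' y')"
    by (intro ext) (simp add: kA_sum[OF S])
  also have "quad q n psi \<dots> = of_real (real q ^ card S) * quad q n psi (pk n S)"
    by (rule quad_scale)
  also have "\<dots> = complex_of_real (real q ^ card S * pur q n psi S)"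
    by (simp add: pur_quad[OF S])
  finally show ?thesis by (simp only: of_real_eq_iff)
qed

lemma rs_ptrace:
  assumes ST: "S \<subseteq> T" and TN: "T \<subseteq> {..<n}"
  shows "reduced_state q n psi S a b =
     (\<Sum>d\<in>configs (T - S) q. reduced_state q n psi T (mrg S a d) (mrg S b d))"
proof -
  have sub: "T - S \<subseteq> {..<n} - S" using TN by auto
  have e: "({..<n} - S) - (T - S) = {..<n} - T" using ST TN by auto
  have m: "mrg S z (mrg (T - S) d c) = mrg T (mrg S z d) c" for z d c
    using ST by (auto simp: mrg_def fun_eq_iff)
  have "reduced_state q n psi S a b = (\<Sum>c\<in>configs ({..<n} - S) q. psi (mrg S a c) * cnj (psi (mrg S b c)))"
    by (rule rs_mrg)
  also have "\<dots> = (\<Sum>d\<in>configs (T - S) q. \<Sum>c\<in>configs ({..<n} - T) q.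
        psi (mrg S a (mrg (T - S) d c)) * cnj (psi (mrg S b (mrg (T - S) d c))))"
    by (subst split_sum[OF sub]) (simp add: e)
  also have "\<dots> = (\<Sum>d\<in>configs (T - S) q. reduced_state q n psi T (mrg S a d) (mrg S b d))"
    by (simp add: m rs_mrg)
  finally show ?thesis .
qed

lemma marg_uniform:
  assumes ku: "k_uniform q n k psi" and kn: "k \<le> n" and U: "U \<subseteq> {..<n}" and Uk: "card U \<le> k"
    and q: "q > 0"
    and a: "a \<in> configs U q" and b: "b \<in> configs U q"
  shows "reduced_state q n psi U a b = (if a = b then 1 / of_nat q ^ card U else 0)"
proof -
  have fU: "finite U" by (rule finite_subset[OF U]) simp
  have "card ({..<n} - U) = n - card U" using U fU by (simp add: card_Diff_subset)
  then have "k - card U \<le> card ({..<n} - U)" using kn by simp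
  then obtain D where D: "D \<subseteq> {..<n} - U" "card D = k - card U"
    by (meson obtain_subset_with_card_n)
  define T where "T = U \<union> D"
  have fD: "finite D" by (rule finite_subset[OF D(1)]) simp
  have UT: "U \<subseteq> T" and TN: "T \<subseteq> {..<n}" using D U by (auto simp: T_def)
  have cT: "card T = k" unfolding T_def using D fU fD Uk by (subst card_Un_disjoint) auto
  have TU: "T - U = D" using D by (auto simp: T_def)
  have kT: "\<forall>a\<in>configs T q. \<forall>b\<in>configs T q. reduced_state q n psi T a b = (if a = b then 1 / (of_nat q) ^ k else 0)"
    using ku TN cT unfolding k_uniform_def by blast
  have "reduced_state q n psi U a b = (\<Sum>d\<in>configs (T - U) q. reduced_state q n psi T (mrg U a d) (mrg U b d))"
    by (rule rs_ptrace[OF UT TN])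
  also have "\<dots> = (\<Sum>d\<in>configs (T - U) q. if a = b then 1 / (of_nat q) ^ k else 0)"
  proof (intro sum.cong refl)
    fix d assume d: "d \<in> configs (T - U) q"
    have "mrg U a d \<in> configs T q" "mrg U b d \<in> configs T q" using mrg_in[OF UT] a b d by auto
    moreover have "mrg U a d = mrg U b d \<longleftrightarrow> a = b" using mrg_eq_iff[OF a d b d] by auto
    ultimately show "reduced_state q n psi T (mrg U a d) (mrg U b d) = (if a = b then 1 / (of_nat q) ^ k else 0)"
      using kT by auto
  qed
  also have "\<dots> = (if a = b then of_nat (q ^ (k - card U)) / (of_nat q) ^ k else 0)"
    using fD by (simp add: TU card_configs D(2))
  also have "\<dots> = (if a = b then 1 / of_nat q ^ card U else 0)"
  proof -
    have "(of_nat q :: complex) ^ k = of_nat q ^ (k - card U) * of_nat q ^ card U"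
      using Uk by (simp add: power_add[symmetric])
    then show ?thesis using q by (simp add: of_nat_power)
  qed
  finally show ?thesis .
qed

lemma pur_uniform:
  assumes ku: "k_uniform q n k psi" and kn: "k \<le> n" and U: "U \<subseteq> {..<n}" and Uk: "card U \<le> k"
    and q: "q > 0"
  shows "pur q n psi U * real q ^ card U = 1"
proof -
  have fU: "finite U" by (rule finite_subset[OF U]) simp
  have "pur q n psi U = (\<Sum>a\<in>configs U q. \<Sum>b\<in>configs U q. if a = b then (1 / real q ^ card U)\<^sup>2 else 0)"
    unfolding pur_def
    by (intro sum.cong refl) (simp add: marg_uniform[OF ku kn U Uk q] norm_divide norm_power)
  also have "\<dots> = real (q ^ card U) * (1 / real q ^ card U)\<^sup>2"
    using fU by (simp add: card_configs)
  finally show ?thesis using q by (simp add: power2_eq_square)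
qed

lemma Ar_zero:
  assumes ku: "k_uniform q n k psi" and kn: "k \<le> n" and T: "T \<subseteq> {..<n}" and Tk: "card T \<le> k"
    and q: "q > 0" and Tne: "T \<noteq> {}"
  shows "Ar q n psi T = 0"
proof -
  have fT: "finite T" by (rule finite_subset[OF T]) simp
  have "Ar q n psi T = (\<Sum>X\<in>Pow T. (-1) ^ card (T - X) * real q ^ card X * pur q n psi X)"
    by (rule Ar_expand[OF q T])
  also have "\<dots> = (\<Sum>X\<in>Pow T. (\<Prod>i\<in>X. 1) * (\<Prod>i\<in>T - X. - 1 :: real))"
  proof (intro sum.cong refl)
    fix X assume X: "X \<in> Pow T"
    have XN: "X \<subseteq> {..<n}" using X T by auto
    have "card X \<le> card T" using X fT by (auto intro: card_mono)
    then have "pur q n psi X * real q ^ card X = 1" using pur_uniform[OF ku kn XN _ q] Tk by simp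
    then show "(-1) ^ card (T - X) * real q ^ card X * pur q n psi X = (\<Prod>i\<in>X. 1) * (\<Prod>i\<in>T - X. - 1 :: real)"
      by (simp add: mult_ac)
  qed
  also have "\<dots> = (\<Prod>i\<in>T. 1 + (- 1 :: real))"
    by (rule prod_add[OF fT, symmetric])
  also have "\<dots> = 0" using fT Tne by (simp add: card_gt_0_iff)
  finally show ?thesis .
qed

lemma Ar_empty:
  assumes ku: "k_uniform q n k psi" and kn: "k \<le> n" and q: "q > 0"
  shows "Ar q n psi {} = 1"
  using Ar_expand[OF q, of "{}" n psi] pur_uniform[OF ku kn, of "{}"] q by simp

definition Fam :: "nat \<Rightarrow> nat \<Rightarrow> nat set set" where
  "Fam n s = {S. S \<subseteq> {..<n} \<and> card S = s}"

lemma finite_Fam[simp]: "finite (Fam n s)"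
  unfolding Fam_def by (rule finite_subset[of _ "Pow {..<n}"]) auto

definition cY :: "nat \<Rightarrow> nat \<Rightarrow> nat \<Rightarrow> nat" where
  "cY n t s = (if t \<le> s then (n - t) choose (s - t) else 0)"

lemma card_super:
  assumes T: "T \<subseteq> {..<n}"
  shows "card {S \<in> Fam n s. T \<subseteq> S} = cY n (card T) s"
proof (cases "card T \<le> s")
  case False
  have "{S \<in> Fam n s. T \<subseteq> S} = {}"
  proof safe
    fix S assume "S \<in> Fam n s" "T \<subseteq> S"
    then have SN: "S \<subseteq> {..<n}" and cS: "card S = s" "T \<subseteq> S" unfolding Fam_def by auto
    have fS: "finite S" by (rule finite_subset[OF SN]) simp
    have "card T \<le> s" using card_mono[OF fS cS(2)] cS(1) by simp
    with False show "S \<in> {}" by simp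
  qed
  then show ?thesis using False by (simp add: cY_def)
next
  case True
  have fT: "finite T" by (rule finite_subset[OF T]) simp
  have "bij_betw (\<lambda>S. S - T) {S \<in> Fam n s. T \<subseteq> S} {U. U \<subseteq> {..<n} - T \<and> card U = s - card T}"
  proof (rule bij_betw_byWitness[where f'="\<lambda>U. U \<union> T"])
    show "\<forall>S\<in>{S \<in> Fam n s. T \<subseteq> S}. S - T \<union> T = S" by auto
    show "\<forall>U\<in>{U. U \<subseteq> {..<n} - T \<and> card U = s - card T}. U \<union> T - T = U" by auto
    show "(\<lambda>S. S - T) ` {S \<in> Fam n s. T \<subseteq> S} \<subseteq> {U. U \<subseteq> {..<n} - T \<and> card U = s - card T}"
    proof safe
      fix S assume "S \<in> Fam n s" "T \<subseteq> S"
      then show "card (S - T) = s - card T" unfolding Fam_def using fT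
        by (simp add: card_Diff_subset)
    qed (auto simp: Fam_def)
    show "(\<lambda>U. U \<union> T) ` {U. U \<subseteq> {..<n} - T \<and> card U = s - card T} \<subseteq> {S \<in> Fam n s. T \<subseteq> S}"
    proof safe
      fix U assume U: "U \<subseteq> {..<n} - T" "card U = s - card T"
      have fU: "finite U" by (rule finite_subset[OF U(1)]) simp
      have "card (U \<union> T) = card U + card T" using U fU fT by (subst card_Un_disjoint) auto
      then show "U \<union> T \<in> Fam n s" using U True T unfolding Fam_def by auto
    qed
  qed
  then have "card {S \<in> Fam n s. T \<subseteq> S} = card {U. U \<subseteq> {..<n} - T \<and> card U = s - card T}"
    by (rule bij_betw_same_card)
  also have "\<dots> = card ({..<n} - T) choose (s - card T)"
    by (rule n_subsets) simp
  also have "card ({..<n} - T) = n - card T" using T fT by (simp add: card_Diff_subset)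
  finally show ?thesis using True by (simp add: cY_def)
qed

lemma count_identity:
  assumes q: "q > 0"
  shows "real q ^ s * (\<Sum>S\<in>Fam n s. pur q n psi S) = (\<Sum>T\<in>Pow {..<n}. Ar q n psi T * real (cY n (card T) s))"
proof -
  have "real q ^ s * (\<Sum>S\<in>Fam n s. pur q n psi S) = (\<Sum>S\<in>Fam n s. real q ^ card S * pur q n psi S)"
    by (simp add: sum_distrib_left Fam_def)
  also have "\<dots> = (\<Sum>S\<in>Fam n s. \<Sum>T\<in>Pow S. Ar q n psi T)"
    by (intro sum.cong refl) (simp add: Ar_sum[OF q] Fam_def)
  also have "\<dots> = (\<Sum>S\<in>Fam n s. \<Sum>T\<in>Pow {..<n}. if T \<subseteq> S then Ar q n psi T else 0)"
  proof (rule sum.cong[OF refl])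
    fix S assume "S \<in> Fam n s"
    then have h: "{T \<in> Pow {..<n}. T \<subseteq> S} = Pow S" by (auto simp: Fam_def)
    have "(\<Sum>T\<in>Pow {..<n}. if T \<subseteq> S then Ar q n psi T else 0) = (\<Sum>T\<in>{T \<in> Pow {..<n}. T \<subseteq> S}. Ar q n psi T)"
      by (rule sum.inter_filter[symmetric]) simp
    then show "(\<Sum>T\<in>Pow S. Ar q n psi T) = (\<Sum>T\<in>Pow {..<n}. if T \<subseteq> S then Ar q n psi T else 0)"
      by (simp only: h)
  qed
  also have "\<dots> = (\<Sum>T\<in>Pow {..<n}. \<Sum>S\<in>Fam n s. if T \<subseteq> S then Ar q n psi T else 0)"
    by (rule sum.swap)
  also have "\<dots> = (\<Sum>T\<in>Pow {..<n}. Ar q n psi T * real (card {S \<in> Fam n s. T \<subseteq> S}))"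
    by (intro sum.cong refl) (simp add: sum.inter_filter[symmetric])
  also have "\<dots> = (\<Sum>T\<in>Pow {..<n}. Ar q n psi T * real (cY n (card T) s))"
    by (intro sum.cong refl) (simp add: card_super)
  finally show ?thesis .
qed

lemma Fam_sym:
  assumes "s \<le> n"
  shows "(\<Sum>S\<in>Fam n s. pur q n psi S) = (\<Sum>S\<in>Fam n (n - s). pur q n psi S)"
proof (rule sum.reindex_bij_witness[where i="\<lambda>S. {..<n} - S" and j="\<lambda>S. {..<n} - S"])
  fix S assume S: "S \<in> Fam n (n - s)"
  then show "{..<n} - ({..<n} - S) = S" by (auto simp: Fam_def)
  have SN: "S \<subseteq> {..<n}" using S by (auto simp: Fam_def)
  have fS: "finite S" by (rule finite_subset[OF SN]) simp
  show "{..<n} - S \<in> Fam n s" using S assms fS by (auto simp: Fam_def card_Diff_subset)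
next
  fix S assume S: "S \<in> Fam n s"
  then show "{..<n} - ({..<n} - S) = S" by (auto simp: Fam_def)
  have SN: "S \<subseteq> {..<n}" using S by (auto simp: Fam_def)
  have fS: "finite S" by (rule finite_subset[OF SN]) simp
  show "{..<n} - S \<in> Fam n (n - s)" using S assms fS by (auto simp: Fam_def card_Diff_subset)
  show "pur q n psi ({..<n} - S) = pur q n psi S" using S by (auto simp: Fam_def pur_compl)
qed

lemma cY_compl:
  assumes "t \<le> n" "s \<le> n"
  shows "cY n t (n - s) = (n - t) choose s"
proof (cases "t \<le> n - s")
  case True
  then have "(n - t) choose (n - s - t) = (n - t) choose ((n - t) - (n - s - t))"
    by (intro binomial_symmetric) simp
  also have "(n - t) - (n - s - t) = s" using True assms by simp
  finally show ?thesis using True by (simp add: cY_def)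
next
  case False
  then show ?thesis using assms by (simp add: cY_def binomial_eq_0)
qed

lemma main_identity:
  assumes q: "q > 0" and s: "2 * s \<le> n"
  shows "(\<Sum>T\<in>Pow {..<n}. Ar q n psi T * real ((n - card T) choose s))
       = real q ^ (n - 2 * s) * (\<Sum>T\<in>Pow {..<n}. Ar q n psi T * real (cY n (card T) s))"
proof -
  have "(\<Sum>T\<in>Pow {..<n}. Ar q n psi T * real ((n - card T) choose s))
      = (\<Sum>T\<in>Pow {..<n}. Ar q n psi T * real (cY n (card T) (n - s)))"
  proof (intro sum.cong refl)
    fix T assume "T \<in> Pow {..<n}"
    then have "card T \<le> n" using card_mono[of "{..<n}" T] by auto
    then show "Ar q n psi T * real ((n - card T) choose s) = Ar q n psi T * real (cY n (card T) (n - s))"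
      using s by (simp add: cY_compl)
  qed
  also have "\<dots> = real q ^ (n - s) * (\<Sum>S\<in>Fam n (n - s). pur q n psi S)"
    by (rule count_identity[OF q, symmetric])
  also have "(\<Sum>S\<in>Fam n (n - s). pur q n psi S) = (\<Sum>S\<in>Fam n s. pur q n psi S)"
    by (rule Fam_sym[symmetric]) (use s in simp)
  also have "real q ^ (n - s) = real q ^ (n - 2 * s) * real q ^ s"
  proof -
    have "n - s = (n - 2 * s) + s" using s by simp
    then show ?thesis by (simp only: power_add)
  qed
  also have "real q ^ (n - 2 * s) * real q ^ s * (\<Sum>S\<in>Fam n s. pur q n psi S)
      = real q ^ (n - 2 * s) * (real q ^ s * (\<Sum>S\<in>Fam n s. pur q n psi S))" by simp
  also have "real q ^ s * (\<Sum>S\<in>Fam n s. pur q n psi S) = (\<Sum>T\<in>Pow {..<n}. Ar q n psi T * real (cY n (card T) s))"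
    by (rule count_identity[OF q])
  finally show ?thesis .
qed

lemma final_contra:
  fixes A :: "nat set \<Rightarrow> real" and Q lam :: real
  assumes nonneg: "\<And>T. T \<subseteq> {..<n} \<Longrightarrow> A T \<ge> 0"
    and empty: "A {} = 1"
    and zero: "\<And>T. T \<subseteq> {..<n} \<Longrightarrow> T \<noteq> {} \<Longrightarrow> card T \<le> k \<Longrightarrow> A T = 0"
    and MI: "\<And>s. 2 * s \<le> n \<Longrightarrow> (\<Sum>T\<in>Pow {..<n}. A T * real ((n - card T) choose s))
               = Q ^ (n - 2 * s) * (\<Sum>T\<in>Pow {..<n}. A T * real (cY n (card T) s))"
    and ks: "k \<le> s1" "2 * s1 \<le> n" and Q: "Q \<ge> 0"
    and bin: "\<And>t. k < t \<Longrightarrow> t \<le> n \<Longrightarrow> real ((n - t) choose s1) \<le> lam * real ((n - t) choose k)"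
    and rhs: "real (n choose s1) * (Q ^ (n - 2 * s1) - 1) - lam * real (n choose k) * (Q ^ (n - 2 * k) - 1) > 0"
  shows False
proof -
  define c where "c (T::nat set) = real ((n - card T) choose s1) - Q ^ (n - 2 * s1) * real (cY n (card T) s1)
      - lam * (real ((n - card T) choose k) - Q ^ (n - 2 * k) * real (cY n (card T) k))" for T
  have k2: "2 * k \<le> n" using ks by simp
  have pt: "A T * c T = A T * real ((n - card T) choose s1) - Q ^ (n - 2 * s1) * (A T * real (cY n (card T) s1))
      - lam * (A T * real ((n - card T) choose k)) + lam * Q ^ (n - 2 * k) * (A T * real (cY n (card T) k))" for T
    unfolding c_def by (simp add: algebra_simps)
  have "(\<Sum>T\<in>Pow {..<n}. A T * c T) =
     ((\<Sum>T\<in>Pow {..<n}. A T * real ((n - card T) choose s1)) - Q ^ (n - 2 * s1) * (\<Sum>T\<in>Pow {..<n}. A T * real (cY n (card T) s1)))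
     - lam * ((\<Sum>T\<in>Pow {..<n}. A T * real ((n - card T) choose k)) - Q ^ (n - 2 * k) * (\<Sum>T\<in>Pow {..<n}. A T * real (cY n (card T) k)))"
    by (simp only: pt sum.distrib sum_subtractf sum_distrib_left[symmetric] right_diff_distrib mult.assoc diff_diff_eq2 diff_add_eq)
  also have "\<dots> = 0" using MI[OF ks(2)] MI[OF k2] by simp
  finally have tot: "(\<Sum>T\<in>Pow {..<n}. A T * c T) = 0" .
  have "(\<Sum>T\<in>Pow {..<n}. A T * c T) = A {} * c {} + (\<Sum>T\<in>Pow {..<n} - {{}}. A T * c T)"
    by (rule sum.remove) auto
  also have "(\<Sum>T\<in>Pow {..<n} - {{}}. A T * c T) \<le> 0"
  proof (rule sum_nonpos)
    fix T assume T: "T \<in> Pow {..<n} - {{}}"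
    then have TN: "T \<subseteq> {..<n}" and Tne: "T \<noteq> {}" by auto
    have tn: "card T \<le> n" using card_mono[of "{..<n}" T] TN by auto
    show "A T * c T \<le> 0"
    proof (cases "card T \<le> k")
      case True
      then show ?thesis using zero[OF TN Tne] by simp
    next
      case False
      then have "cY n (card T) k = 0" by (simp add: cY_def)
      then have "c T = (real ((n - card T) choose s1) - lam * real ((n - card T) choose k)) - Q ^ (n - 2 * s1) * real (cY n (card T) s1)"
        unfolding c_def by simp
      also have "\<dots> \<le> 0"
      proof -
        have "real ((n - card T) choose s1) \<le> lam * real ((n - card T) choose k)" using bin[of "card T"] False tn by simp
        moreover have "0 \<le> Q ^ (n - 2 * s1) * real (cY n (card T) s1)" using Q by simp
        ultimately show ?thesis by linarith
      qed
      finally show ?thesis using nonneg[OF TN] by (simp add: mult_nonneg_nonpos)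
    qed
  qed
  finally have "0 \<le> A {} * c {}" using tot by simp
  moreover have "c {} = - (real (n choose s1) * (Q ^ (n - 2 * s1) - 1) - lam * real (n choose k) * (Q ^ (n - 2 * k) - 1))"
    unfolding c_def by (simp add: cY_def algebra_simps)
  ultimately show False using rhs empty by simp
qed

lemma binom_key:
  fixes s0 s1 u0 N :: nat
  assumes "s0 \<le> s1" "N \<le> s1 + u0"
  shows "(s1 choose (s1 - s0)) * (N choose s1) \<le> ((u0 + (s1 - s0)) choose (s1 - s0)) * (N choose s0)"
proof (cases "N < s1")
  case True
  then show ?thesis by (simp add: binomial_eq_0)
next
  case False
  then have "(N choose s1) * (s1 choose s0) = (N choose s0) * ((N - s0) choose (s1 - s0))"
    using assms by (intro choose_mult) auto
  moreover have "s1 choose s0 = s1 choose (s1 - s0)" by (rule binomial_symmetric[OF assms(1)])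
  moreover have "(N - s0) choose (s1 - s0) \<le> (u0 + (s1 - s0)) choose (s1 - s0)"
    using assms by (intro binomial_right_mono) auto
  ultimately show ?thesis by (metis mult.commute mult_le_mono2)
qed

lemma bin_real:
  fixes s0 s1 u0 N :: nat
  assumes "s0 \<le> s1" "N \<le> s1 + u0"
  shows "real (N choose s1) \<le> (real ((u0 + (s1 - s0)) choose (s1 - s0)) / real (s1 choose (s1 - s0))) * real (N choose s0)"
proof -
  have pos: "real (s1 choose (s1 - s0)) > 0" by simp
  have "real (s1 choose (s1 - s0)) * real (N choose s1) \<le> real ((u0 + (s1 - s0)) choose (s1 - s0)) * real (N choose s0)"
    using binom_key[OF assms] by (simp only: of_nat_mult[symmetric] of_nat_le_iff)
  then show ?thesis using pos by (simp add: field_simps)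
qed

lemma core:
  assumes ku: "k_uniform q n k psi" and q: "q \<ge> 2" and ks: "k \<le> s1" "2 * s1 \<le> n"
    and bin: "\<And>t. k < t \<Longrightarrow> t \<le> n \<Longrightarrow> real ((n - t) choose s1) \<le> lam * real ((n - t) choose k)"
    and rhs: "real (n choose s1) * (real q ^ (n - 2 * s1) - 1) - lam * real (n choose k) * (real q ^ (n - 2 * k) - 1) > 0"
  shows False
proof -
  have q0: "q > 0" using q by simp
  have kn: "k \<le> n" using ks by simp
  show False
  proof (rule final_contra[of n "Ar q n psi" k "real q" s1 lam])
    show "\<And>T. T \<subseteq> {..<n} \<Longrightarrow> 0 \<le> Ar q n psi T" by (rule Ar_nonneg)
    show "Ar q n psi {} = 1" by (rule Ar_empty[OF ku kn q0])
    show "\<And>T. T \<subseteq> {..<n} \<Longrightarrow> T \<noteq> {} \<Longrightarrow> card T \<le> k \<Longrightarrow> Ar q n psi T = 0"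
      by (rule Ar_zero[OF ku kn _ _ q0])
    show "\<And>s. 2 * s \<le> n \<Longrightarrow> (\<Sum>T\<in>Pow {..<n}. Ar q n psi T * real ((n - card T) choose s))
               = real q ^ (n - 2 * s) * (\<Sum>T\<in>Pow {..<n}. Ar q n psi T * real (cY n (card T) s))"
      by (rule main_identity[OF q0])
  qed (use ks bin rhs in auto)
qed

lemma fact_ratio_mono:
  fixes a b c :: nat
  assumes "a \<le> b"
  shows "fact (a + c) * fact b \<le> (fact (b + c) * fact a :: nat)"
proof (induction c)
  case 0
  then show ?case by (simp add: mult.commute)
next
  case (Suc c)
  have "fact (a + Suc c) * fact b = (a + c + 1) * (fact (a + c) * fact b)" by (simp add: algebra_simps)
  also have "\<dots> \<le> (b + c + 1) * (fact (b + c) * fact a)"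
    by (rule mult_le_mono[OF _ Suc.IH]) (use assms in simp)
  also have "\<dots> = fact (b + Suc c) * fact a" by (simp add: algebra_simps)
  finally show ?case .
qed

lemma fact_ratio_real:
  fixes a b c :: nat
  assumes "a \<le> b"
  shows "fact (a + c) / fact a \<le> (fact (b + c) / fact b :: real)"
proof -
  have "real (fact (a + c) * fact b) \<le> real (fact (b + c) * fact a)"
    using fact_ratio_mono[OF assms] by (simp only: of_nat_le_iff)
  then have "fact (a + c) * fact b \<le> (fact (b + c) * fact a :: real)" by (simp only: of_nat_mult of_nat_fact)
  then show ?thesis by (simp add: field_simps)
qed

lemma alg_key:
  fixes a b c d e f g h Q2 Ql :: real
  assumes pos: "a > 0" "b > 0" "c > 0" "d > 0" "e > 0" "f > 0" "g > 0" "h > 0" "Q2 > 0"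
    and H: "a / b > Ql / Q2 * (c / d)"
  shows "g / (e * b) * Q2 - (c / (h * d)) / (e / (h * f)) * (g / (f * a)) * Ql > 0"
proof -
  have "a / b * (Q2 / a) > Ql / Q2 * (c / d) * (Q2 / a)"
    using H pos by (intro mult_strict_right_mono) auto
  then have h1: "Q2 / b > c * Ql / (d * a)" using pos by (simp add: field_simps)
  have eq: "g / (e * b) * Q2 - (c / (h * d)) / (e / (h * f)) * (g / (f * a)) * Ql = (g / e) * (Q2 / b - c * Ql / (d * a))"
    using pos by (simp add: field_simps)
  show ?thesis unfolding eq using h1 pos by simp
qed

lemma even_case:
  fixes q n l m :: nat
  assumes ku: "k_uniform q n (m - l) psi" and q: "q \<ge> 2" and l2: "l \<ge> 2" and ml: "l \<le> m" and n: "n = 2 * m"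
    and H: "fact (m + l) / fact (m + 1) >
            ((real q) ^ (2 * l) - 1) / ((real q)\<^sup>2 - 1) * (fact (2 * l - 1) / fact l)"
  shows False
proof -
  have dd: "m - 1 - (m - l) = l - 1" using ml l2 by simp
  define lam where "lam = real ((l + (m - 1 - (m - l))) choose (m - 1 - (m - l))) / real ((m - 1) choose (m - 1 - (m - l)))"
  have lam': "lam = real ((2 * l - 1) choose (l - 1)) / real ((m - 1) choose (l - 1))"
  proof -
    have e: "l + (l - 1) = 2 * l - 1" using l2 by simp
    show ?thesis unfolding lam_def dd e ..
  qed
  show False
  proof (rule core[OF ku q, of "m - 1" lam])
    show "m - l \<le> m - 1" "2 * (m - 1) \<le> n" using l2 n by auto
    fix t assume t: "m - l < t" "t \<le> n"
    show "real ((n - t) choose (m - 1)) \<le> lam * real ((n - t) choose (m - l))"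
      unfolding lam_def by (rule bin_real) (use t n ml l2 in auto)
  next
    have e1: "2 * m - 2 * (m - 1) = 2" "2 * m - 2 * (m - l) = 2 * l" using n ml l2 by auto
    have b1: "real ((2 * m) choose (m - 1)) = fact (2 * m) / (fact (m - 1) * fact (m + 1))"
    proof -
      have "real ((2 * m) choose (m - 1)) = fact (2 * m) / (fact (m - 1) * fact (2 * m - (m - 1)))"
        by (rule binomial_fact) simp
      also have "2 * m - (m - 1) = m + 1" using ml l2 by simp
      finally show ?thesis .
    qed
    have b2: "real ((2 * l - 1) choose (l - 1)) = fact (2 * l - 1) / (fact (l - 1) * fact l)"
    proof -
      have "real ((2 * l - 1) choose (l - 1)) = fact (2 * l - 1) / (fact (l - 1) * fact (2 * l - 1 - (l - 1)))"
        by (rule binomial_fact) simp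
      also have "2 * l - 1 - (l - 1) = l" using l2 by simp
      finally show ?thesis .
    qed
    have b3: "real ((m - 1) choose (l - 1)) = fact (m - 1) / (fact (l - 1) * fact (m - l))"
    proof -
      have "real ((m - 1) choose (l - 1)) = fact (m - 1) / (fact (l - 1) * fact ((m - 1) - (l - 1)))"
        by (rule binomial_fact) (use ml in simp)
      also have "(m - 1) - (l - 1) = m - l" using l2 ml by simp
      finally show ?thesis .
    qed
    have b4: "real ((2 * m) choose (m - l)) = fact (2 * m) / (fact (m - l) * fact (m + l))"
    proof -
      have "real ((2 * m) choose (m - l)) = fact (2 * m) / (fact (m - l) * fact (2 * m - (m - l)))"
        by (rule binomial_fact) simp
      also have "2 * m - (m - l) = m + l" using ml by simp
      finally show ?thesis .
    qed
    have Q2: "(real q)\<^sup>2 - 1 > 0"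
    proof -
      have "real q \<ge> 2" using q by simp
      then have "real q * real q \<ge> 2 * 2" using mult_mono[of 2 "real q" 2 "real q"] by simp
      then show ?thesis by (simp add: power2_eq_square)
    qed
    have key: "fact (2 * m) / (fact (m - 1) * fact (m + 1)) * ((real q)\<^sup>2 - 1)
       - (fact (2 * l - 1) / (fact (l - 1) * fact l)) / (fact (m - 1) / (fact (l - 1) * fact (m - l)))
         * (fact (2 * m) / (fact (m - l) * fact (m + l))) * ((real q) ^ (2 * l) - 1) > 0"
      by (rule alg_key[OF _ _ _ _ _ _ _ _ Q2 H]) auto
    show "real (n choose (m - 1)) * (real q ^ (n - 2 * (m - 1)) - 1) - lam * real (n choose (m - l)) * (real q ^ (n - 2 * (m - l)) - 1) > 0"
      using key unfolding n e1 lam' b2 b3 b1 b4 by simp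
  qed
qed

lemma odd_case:
  fixes q n l m :: nat
  assumes ku: "k_uniform q n (m - l) psi" and q: "q \<ge> 2" and l1: "l \<ge> 1" and ml: "l \<le> m" and n: "n = 2 * m + 1"
    and H: "fact (m + l + 1) / fact (m + 1) >
            ((real q) ^ (2 * l + 1) - 1) / (real q - 1) * (fact (2 * l) / fact l)"
  shows False
proof -
  have dd: "m - (m - l) = l" using ml by simp
  define lam where "lam = real ((l + (m - (m - l))) choose (m - (m - l))) / real (m choose (m - (m - l)))"
  have lam': "lam = real ((2 * l) choose l) / real (m choose l)"
    unfolding lam_def dd by (simp add: mult_2)
  show False
  proof (rule core[OF ku q, of m lam])
    show "m - l \<le> m" "2 * m \<le> n" using n by auto
    fix t assume t: "m - l < t" "t \<le> n"
    show "real ((n - t) choose m) \<le> lam * real ((n - t) choose (m - l))"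
      unfolding lam_def by (rule bin_real) (use t n ml in auto)
  next
    have e1: "2 * m + 1 - 2 * m = 1" "2 * m + 1 - 2 * (m - l) = 2 * l + 1" using n ml by auto
    have b1: "real ((2 * m + 1) choose m) = fact (2 * m + 1) / (fact m * fact (m + 1))"
    proof -
      have "real ((2 * m + 1) choose (m)) = fact (2 * m + 1) / (fact (m) * fact (2 * m + 1 - (m)))"
        by (rule binomial_fact) simp
      also have "2 * m + 1 - m = m + 1" by simp
      finally show ?thesis .
    qed
    have b2: "real ((2 * l) choose l) = fact (2 * l) / (fact l * fact l)"
    proof -
      have "real ((2 * l) choose (l)) = fact (2 * l) / (fact (l) * fact (2 * l - (l)))"
        by (rule binomial_fact) simp
      also have "2 * l - l = l" by simp
      finally show ?thesis .
    qed
    have b3: "real (m choose l) = fact m / (fact l * fact (m - l))"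
      by (rule binomial_fact) (use ml in simp)
    have b4: "real ((2 * m + 1) choose (m - l)) = fact (2 * m + 1) / (fact (m - l) * fact (m + l + 1))"
    proof -
      have "real ((2 * m + 1) choose (m - l)) = fact (2 * m + 1) / (fact (m - l) * fact (2 * m + 1 - (m - l)))"
        by (rule binomial_fact) simp
      also have "2 * m + 1 - (m - l) = m + l + 1" using ml by simp
      finally show ?thesis .
    qed
    have Q2: "real q - 1 > 0" using q by simp
    have key: "fact (2 * m + 1) / (fact m * fact (m + 1)) * (real q - 1)
       - (fact (2 * l) / (fact l * fact l)) / (fact m / (fact l * fact (m - l)))
         * (fact (2 * m + 1) / (fact (m - l) * fact (m + l + 1))) * ((real q) ^ (2 * l + 1) - 1) > 0"
      by (rule alg_key[OF _ _ _ _ _ _ _ _ Q2 H]) auto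
    show "real (n choose m) * (real q ^ (n - 2 * m) - 1) - lam * real (n choose (m - l)) * (real q ^ (n - 2 * (m - l)) - 1) > 0"
      using key unfolding n e1 lam' b2 b3 b1 b4 by simp
  qed
qed

theorem corollary1:
  fixes q n l m :: nat
  assumes "q \<ge> 2"
    and "l \<ge> 1"
    and "even n \<Longrightarrow> l \<ge> 2"
    and "(n = 2 * m \<and>
          fact (m + l) / fact (m + 1) >
            ((real q) ^ (2 * l) - 1) / ((real q)\<^sup>2 - 1) * (fact (2 * l - 1) / fact l))
       \<or> (n = 2 * m + 1 \<and>
          fact (m + l + 1) / fact (m + 1) >
            ((real q) ^ (2 * l + 1) - 1) / (real q - 1) * (fact (2 * l) / fact l))"
  shows "\<not> (\<exists>psi. AME_defect q n l psi)"
proof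
  assume "\<exists>psi. AME_defect q n l psi"
  then obtain psi where ku0: "k_uniform q n (n div 2 - l) psi" unfolding AME_defect_def by blast
  have q1: "real q \<ge> 2" using assms(1) by simp
  from assms(4) show False
  proof (elim disjE conjE)
    assume n: "n = 2 * m" and H: "fact (m + l) / fact (m + 1) >
            ((real q) ^ (2 * l) - 1) / ((real q)\<^sup>2 - 1) * (fact (2 * l - 1) / fact l)"
    have l2: "l \<ge> 2" using assms(3) n by simp
    show False
    proof (cases "l \<le> m")
      case True
      have "n div 2 - l = m - l" using n by simp
      then show False using even_case[OF _ assms(1) l2 True n H] ku0 by simp
    next
      case False
      have r: "fact (m + 1 + (l - 1)) / fact (m + 1) \<le> (fact (l + (l - 1)) / fact l :: real)"
        by (rule fact_ratio_real) (use False in simp)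
      have e: "m + 1 + (l - 1) = m + l" "l + (l - 1) = 2 * l - 1" using l2 by auto
      have Q2: "(real q)\<^sup>2 - 1 > 0"
      proof -
        have "real q * real q \<ge> 2 * 2" using mult_mono[of 2 "real q" 2 "real q"] q1 by simp
        then show ?thesis by (simp add: power2_eq_square)
      qed
      have "(real q)\<^sup>2 \<le> real q ^ (2 * l)"
        by (rule power_increasing) (use l2 q1 in auto)
      then have ge1: "((real q) ^ (2 * l) - 1) / ((real q)\<^sup>2 - 1) \<ge> 1" using Q2 by simp
      have "0 \<le> fact (2 * l - 1) / (fact l :: real)" by simp
      then have "fact (2 * l - 1) / fact l \<le> ((real q) ^ (2 * l) - 1) / ((real q)\<^sup>2 - 1) * (fact (2 * l - 1) / fact l)"
        using ge1 by (metis mult_le_cancel_right1 not_le order_less_le_trans zero_less_one)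
      then show False using r e H by simp
    qed
  next
    assume n: "n = 2 * m + 1" and H: "fact (m + l + 1) / fact (m + 1) >
            ((real q) ^ (2 * l + 1) - 1) / (real q - 1) * (fact (2 * l) / fact l)"
    show False
    proof (cases "l \<le> m")
      case True
      have "n div 2 - l = m - l" using n by simp
      then show False using odd_case[OF _ assms(1) assms(2) True n H] ku0 by simp
    next
      case False
      have r: "fact (m + 1 + l) / fact (m + 1) \<le> (fact (l + l) / fact l :: real)"
        by (rule fact_ratio_real) (use False in simp)
      have e: "m + 1 + l = m + l + 1" "l + l = 2 * l" by auto
      have Q2: "real q - 1 > 0" using q1 by simp
      have "real q ^ 1 \<le> real q ^ (2 * l + 1)"
        by (rule power_increasing) (use q1 in auto)
      then have ge1: "((real q) ^ (2 * l + 1) - 1) / (real q - 1) \<ge> 1" using Q2 by simp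
      have "0 \<le> fact (2 * l) / (fact l :: real)" by simp
      then have "fact (2 * l) / fact l \<le> ((real q) ^ (2 * l + 1) - 1) / (real q - 1) * (fact (2 * l) / fact l)"
        using ge1 by (metis mult_le_cancel_right1 not_le order_less_le_trans zero_less_one)
      then show False using r e H by simp
    qed
  qed
qed

end
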